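(* Let $U$ be a nonempty set, let $f:\{T,F\}^n\to\{T,F\}$ be a Boolean function, and let $\pi_1,\dots,\pi_n$ be partitions of $U$. For $u,u'\in U$ and each $i$, set $v_i(u,u')=T$ if $(u,u')\in\operatorname{dit}(\pi_i)$ and $v_i(u,u')=F$ if $(u,u')\in\operatorname{indit}(\pi_i)$. Let $G$ be the simple undirected graph on $U$ in which distinct $u,u'$ are adjacent iff $f(v_1(u,u'),\dots,v_n(u,u'))=F$, and let $f(\pi_1,\dots,\pi_n)$ denote the partition of $U$ into the connected components of $G$. Let $$S=\bigcup_{\substack{(t_1,\dots,t_n)\in\{T,F\}^n\\ f(t_1,\dots,t_n)=F}}\ \bigcap_{i=1}^n A_i^{t_i},\qquad A_i^{T}=\operatorname{dit}(\pi_i),\ A_i^{F}=\operatorname{indit}(\pi_i),$$ (the set obtained from the disjunctive normal form of $\lnot f$ by replacing each unnegated variable $P_i$ by $\operatorname{dit}(\pi_i)$, each negated variable $\lnot P_i$ by $\operatorname{indit}(\pi_i)$, disjunction by union and conjunction by intersection). Then the equivalence relation $\operatorname{indit}(f(\pi_1,\dots,\pi_n))$ equals the reflexive-symmetric-transitive closure $\overline{S}$ of $S$ in $U\times U$; equivalently, $f(\pi_1,\dots,\pi_n)$ is the set of equivalence classes of $\overline{S}$.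
   Context: A partition of $U$ is a set of pairwise disjoint nonempty subsets of $U$ (blocks) whose union is $U$. For a partition $\pi$, $\operatorname{indit}(\pi)=\{(u,u')\in U\times U: u,u' \text{ lie in the same block of }\pi\}$ and $\operatorname{dit}(\pi)=U\times U\setminus\operatorname{indit}(\pi)$. The reflexive-symmetric-transitive closure $\overline{S}$ of $S\subseteq U\times U$ is the intersection of all equivalence relations on $U$ containing $S$. *)

theory Defs
  imports Main "HOL-Library.Disjoint_Sets"
begin

definition indit :: "'a set \<Rightarrow> 'a set set \<Rightarrow> ('a \<times> 'a) set" where
  "indit U P = {(u, u'). u \<in> U \<and> u' \<in> U \<and> (\<exists>B\<in>P. u \<in> B \<and> u' \<in> B)}"

definition dit :: "'a set \<Rightarrow> 'a set set \<Rightarrow> ('a \<times> 'a) set" where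
  "dit U P = U \<times> U - indit U P"

definition rst_closure :: "'a set \<Rightarrow> ('a \<times> 'a) set \<Rightarrow> ('a \<times> 'a) set" where
  "rst_closure U S = \<Inter> {R. equiv U R \<and> S \<subseteq> R}"

text \<open>Truth-value vector v(u,u') for partitions pis 0 .. pis (n-1): True = T iff distinction.\<close>
definition dit_vec :: "'a set \<Rightarrow> nat \<Rightarrow> (nat \<Rightarrow> 'a set set) \<Rightarrow> 'a \<Rightarrow> 'a \<Rightarrow> bool list" where
  "dit_vec U n pis u u' = map (\<lambda>i. (u, u') \<in> dit U (pis i)) [0..<n]"

definition graph_edges :: "'a set \<Rightarrow> nat \<Rightarrow> (bool list \<Rightarrow> bool) \<Rightarrow> (nat \<Rightarrow> 'a set set) \<Rightarrow> ('a \<times> 'a) set" where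
  "graph_edges U n f pis =
     {(u, u'). u \<in> U \<and> u' \<in> U \<and> u \<noteq> u' \<and> \<not> f (dit_vec U n pis u u')}"

definition f_partition :: "'a set \<Rightarrow> nat \<Rightarrow> (bool list \<Rightarrow> bool) \<Rightarrow> (nat \<Rightarrow> 'a set set) \<Rightarrow> 'a set set" where
  "f_partition U n f pis = U // ((graph_edges U n f pis)\<^sup>*)"

definition A_set :: "'a set \<Rightarrow> 'a set set \<Rightarrow> bool \<Rightarrow> ('a \<times> 'a) set" where
  "A_set U P t = (if t then dit U P else indit U P)"

definition S_set :: "'a set \<Rightarrow> nat \<Rightarrow> (bool list \<Rightarrow> bool) \<Rightarrow> (nat \<Rightarrow> 'a set set) \<Rightarrow> ('a \<times> 'a) set" where
  "S_set U n f pis =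
     (\<Union>ts \<in> {ts. length ts = n \<and> \<not> f ts}. (U \<times> U) \<inter> (\<Inter>i \<in> {..<n}. A_set U (pis i) (ts ! i)))"

end

theory Submission
  imports Defs
begin

lemma indit_sym: "(u,v) \<in> indit U P \<longleftrightarrow> (v,u) \<in> indit U P"
  unfolding indit_def by auto

lemma dit_sym: "(u,v) \<in> dit U P \<longleftrightarrow> (v,u) \<in> dit U P"
  unfolding dit_def indit_def by auto

lemma dit_vec_sym: "dit_vec U n pis u v = dit_vec U n pis v u"
  unfolding dit_vec_def by (intro map_cong refl dit_sym)

lemma E_sub: "graph_edges U n f pis \<subseteq> U \<times> U"
  unfolding graph_edges_def by auto

lemma E_sym: "sym (graph_edges U n f pis)"
proof (rule symI)
  fix x y assume "(x,y) \<in> graph_edges U n f pis"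
  then show "(y,x) \<in> graph_edges U n f pis"
    unfolding graph_edges_def using dit_vec_sym[of U n pis x y] by auto
qed

lemma reach_U: "(x,y) \<in> (graph_edges U n f pis)\<^sup>* \<Longrightarrow> x \<in> U \<Longrightarrow> y \<in> U"
  by (induction rule: rtrancl_induct) (use E_sub[of U n f pis] in blast)+

lemma reach_sym: "(x,y) \<in> (graph_edges U n f pis)\<^sup>* \<Longrightarrow> (y,x) \<in> (graph_edges U n f pis)\<^sup>*"
  by (metis E_sym rtrancl_converseD sym_conv_converse_eq sym_rtrancl)

lemma indit_quot:
  "indit U (U // (graph_edges U n f pis)\<^sup>*) = (graph_edges U n f pis)\<^sup>* \<inter> U \<times> U"
  (is "?L = ?E \<inter> _")
proof
  show "?L \<subseteq> ?E \<inter> U \<times> U"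
  proof
    fix p assume "p \<in> ?L"
    then obtain u v B where p: "p = (u,v)" "u \<in> U" "v \<in> U" "B \<in> U // ?E" "u \<in> B" "v \<in> B"
      unfolding indit_def by auto
    then obtain x where "x \<in> U" "B = ?E `` {x}" by (auto elim: quotientE)
    then have "(x,u) \<in> ?E" "(x,v) \<in> ?E" using p by auto
    then have "(u,v) \<in> ?E" using reach_sym rtrancl_trans by metis
    then show "p \<in> ?E \<inter> U \<times> U" using p by auto
  qed
next
  show "?E \<inter> U \<times> U \<subseteq> ?L"
  proof
    fix p assume "p \<in> ?E \<inter> U \<times> U"
    then obtain u v where p: "p = (u,v)" "u \<in> U" "v \<in> U" "(u,v) \<in> ?E" by auto
    have "?E `` {u} \<in> U // ?E" using p by (auto intro: quotientI)
    moreover have "u \<in> ?E `` {u}" "v \<in> ?E `` {u}" using p by auto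
    ultimately show "p \<in> ?L" unfolding indit_def using p by blast
  qed
qed

lemma S_key:
  assumes "length ts = n" "u \<in> U" "v \<in> U"
  shows "(u,v) \<in> (\<Inter>i \<in> {..<n}. A_set U (pis i) (ts ! i)) \<longleftrightarrow> ts = dit_vec U n pis u v"
proof -
  have A: "(u,v) \<in> A_set U (pis i) b \<longleftrightarrow> b = ((u,v) \<in> dit U (pis i))" for i b
    using assms(2,3) by (cases b) (auto simp: A_set_def dit_def)
  have "(u,v) \<in> (\<Inter>i \<in> {..<n}. A_set U (pis i) (ts ! i)) \<longleftrightarrow>
        (\<forall>i<n. ts ! i = ((u,v) \<in> dit U (pis i)))"
    by (auto simp: A)
  also have "\<dots> \<longleftrightarrow> ts = dit_vec U n pis u v"
    by (simp add: dit_vec_def list_eq_iff_nth_eq assms(1))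
  finally show ?thesis .
qed

lemma S_eq: "S_set U n f pis = {(u,v). u \<in> U \<and> v \<in> U \<and> \<not> f (dit_vec U n pis u v)}"
proof (rule set_eqI)
  fix p :: "'a \<times> 'a"
  obtain u v where p: "p = (u,v)" by (cases p)
  have len: "length (dit_vec U n pis u v) = n" by (simp add: dit_vec_def)
  have "p \<in> S_set U n f pis \<longleftrightarrow> u \<in> U \<and> v \<in> U \<and>
     (\<exists>ts. length ts = n \<and> \<not> f ts \<and> (u,v) \<in> (\<Inter>i \<in> {..<n}. A_set U (pis i) (ts ! i)))"
    unfolding S_set_def p by blast
  also have "\<dots> \<longleftrightarrow> u \<in> U \<and> v \<in> U \<and> \<not> f (dit_vec U n pis u v)"
    using S_key[of _ n u U v pis] len by metis
  finally show "p \<in> S_set U n f pis \<longleftrightarrow> p \<in> {(u,v). u \<in> U \<and> v \<in> U \<and> \<not> f (dit_vec U n pis u v)}"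
    using p by simp
qed

theorem mainTheorem5:
  fixes U :: "'a set" and n :: nat and f :: "bool list \<Rightarrow> bool" and pis :: "nat \<Rightarrow> 'a set set"
  assumes "U \<noteq> {}"
    and "\<And>i. i < n \<Longrightarrow> partition_on U (pis i)"
  shows "indit U (f_partition U n f pis) = rst_closure U (S_set U n f pis)
         \<and> f_partition U n f pis = U // rst_closure U (S_set U n f pis)"
proof -
  let ?E = "(graph_edges U n f pis)\<^sup>*"
  let ?R = "?E \<inter> U \<times> U"
  have eqR: "equiv U ?R"
  proof (rule equivI)
    show "refl_on U ?R" unfolding refl_on_def by blast
    show "?R \<subseteq> U \<times> U" by blast
    show "sym ?R"
    proof (rule symI)
      fix x y assume "(x,y) \<in> ?R"
      then show "(y,x) \<in> ?R" using reach_sym[of x y U n f pis] by blast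
    qed
    show "trans ?R"
    proof (rule transI)
      fix x y z assume "(x,y) \<in> ?R" "(y,z) \<in> ?R"
      then show "(x,z) \<in> ?R" using rtrancl_trans[of x y _ z] by blast
    qed
  qed
  have SR: "S_set U n f pis \<subseteq> ?R"
  proof
    fix p assume "p \<in> S_set U n f pis"
    then obtain u v where p: "p = (u,v)" "u \<in> U" "v \<in> U" "\<not> f (dit_vec U n pis u v)"
      unfolding S_eq by auto
    show "p \<in> ?R"
    proof (cases "u = v")
      case False
      then have "(u,v) \<in> graph_edges U n f pis" using p unfolding graph_edges_def by auto
      then show ?thesis using p by auto
    qed (use p in auto)
  qed
  have minR: "?R \<subseteq> Q" if "equiv U Q" "S_set U n f pis \<subseteq> Q" for Q
  proof -
    have "(x,y) \<in> Q" if "(x,y) \<in> ?E" "x \<in> U" for x y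
      using that(1,2)
    proof (induction rule: rtrancl_induct)
      case base then show ?case using \<open>equiv U Q\<close> by (auto simp: equiv_def refl_on_def)
    next
      case (step y z)
      then have "(y,z) \<in> S_set U n f pis" unfolding S_eq graph_edges_def by auto
      then have "(y,z) \<in> Q" using \<open>S_set U n f pis \<subseteq> Q\<close> by auto
      then show ?case using step \<open>equiv U Q\<close> by (meson equiv_def transD)
    qed
    then show ?thesis by auto
  qed
  have cl: "rst_closure U (S_set U n f pis) = ?R"
    unfolding rst_closure_def
  proof
    show "\<Inter> {R. equiv U R \<and> S_set U n f pis \<subseteq> R} \<subseteq> ?R" using eqR SR by blast
    show "?R \<subseteq> \<Inter> {R. equiv U R \<and> S_set U n f pis \<subseteq> R}" using minR by blast
  qed
  have img: "?E `` {x} = ?R `` {x}" if "x \<in> U" for x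
  proof
    show "?E `` {x} \<subseteq> ?R `` {x}"
    proof
      fix y assume "y \<in> ?E `` {x}"
      then have "(x,y) \<in> ?E" by simp
      moreover then have "y \<in> U" using reach_U that by metis
      ultimately show "y \<in> ?R `` {x}" using that by simp
    qed
  qed auto
  have q: "U // ?E = U // ?R"
    unfolding quotient_def by (rule SUP_cong[OF refl]) (simp add: img)
  show ?thesis
    unfolding f_partition_def cl indit_quot using q by simp
qed

end
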